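(* Let $0<\varepsilon<1$. For $n,k\in\mathbb N$ with $k$ even and $k<n$, define $K_i=\{\frac{i-1}2k,\dots,\frac i2k-1\}$ for $i=1,\dots,\lceil 2n/k\rceil-1$ and $K_{\lceil2n/k\rceil}=\{\frac{\lceil2n/k\rceil-1}{2}k,\dots,n-1\}$; for $S\subset n^*=\{0,\dots,n-1\}$ let $B(S)=\operatorname{card}\{i:S\cap K_i\neq\emptyset\}$, and let $\mathcal B(n,k,\varepsilon)=\{S\subset n^*:B(S)\le(2n/k)(1-\varepsilon)\}$. Then there exists an even $k\in\mathbb N$ such that $\lim_{n\to\infty}\operatorname{card}(\mathcal B(n,k,\varepsilon))/2^n=0$. *)

theory Defs
  imports Complex_Main
begin

definition nblocks :: "nat \<Rightarrow> nat \<Rightarrow> nat" where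
  "nblocks n k = nat \<lceil>2 * real n / real k\<rceil>"

definition blockK :: "nat \<Rightarrow> nat \<Rightarrow> nat \<Rightarrow> nat set" where
  "blockK n k i =
     (if i < nblocks n k then {(i - 1) * (k div 2) .. i * (k div 2) - 1}
      else {(nblocks n k - 1) * (k div 2) .. n - 1})"

definition Bcount :: "nat \<Rightarrow> nat \<Rightarrow> nat set \<Rightarrow> nat" where
  "Bcount n k S = card {i \<in> {1..nblocks n k}. S \<inter> blockK n k i \<noteq> {}}"

definition Bset :: "nat \<Rightarrow> nat \<Rightarrow> real \<Rightarrow> nat set set" where
  "Bset n k \<epsilon> = {S. S \<subseteq> {0..<n} \<and>
      real (Bcount n k S) \<le> (2 * real n / real k) * (1 - \<epsilon>)}"

end

theory Submission imports Defs begin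

lemma nb_ge: assumes "N > 0" shows "n \<le> nblocks n (2*N) * N"
proof -
  have "2 * real n / real (2*N) \<le> real_of_int \<lceil>2 * real n / real (2*N)\<rceil>" by (rule le_of_int_ceiling)
  hence "real n / real N \<le> real (nblocks n (2*N))" unfolding nblocks_def using assms by simp
  hence "real n \<le> real (nblocks n (2*N)) * real N" using assms by (simp add: field_simps)
  thus ?thesis by (simp flip: of_nat_mult)
qed

lemma nb_le: assumes "N > 0" shows "real (nblocks n (2*N)) \<le> real n / real N + 1"
proof -
  have "real_of_int \<lceil>2 * real n / real (2*N)\<rceil> \<le> 2 * real n / real (2*N) + 1" by (rule of_int_ceiling_le_add_one)
  thus ?thesis unfolding nblocks_def using assms by simp
qed

lemma cover: assumes "N > 0" "x < n" shows "\<exists>i\<in>{1..nblocks n (2*N)}. x \<in> blockK n (2*N) i"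
proof -
  define nb where "nb = nblocks n (2*N)"
  have nbN: "n \<le> nb * N" using nb_ge[OF assms(1)] nb_def by simp
  have nb1: "nb \<ge> 1" using nbN assms by (cases nb) auto
  have dm: "x div N * N \<le> x" "x < (x div N + 1) * N"
  proof -
    have e: "x div N * N + x mod N = x" by (rule div_mult_mod_eq)
    have "x mod N < N" using assms(1) by simp
    moreover have "(x div N + 1) * N = x div N * N + N" by (simp add: algebra_simps)
    ultimately show "x div N * N \<le> x" "x < (x div N + 1) * N" using e by linarith+
  qed
  show ?thesis
  proof (cases "x div N + 1 < nb")
    case True
    hence "x \<in> blockK n (2*N) (x div N + 1)" unfolding blockK_def nb_def[symmetric] using dm by auto
    thus ?thesis using True nb_def by (intro bexI[of _ "x div N + 1"]) auto
  next
    case False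
    hence "nb - 1 \<le> x div N" by simp
    hence "(nb - 1) * N \<le> x div N * N" by (rule mult_right_mono) simp
    hence "(nb - 1) * N \<le> x" using dm(1) by linarith
    hence "x \<in> blockK n (2*N) nb" unfolding blockK_def nb_def[symmetric] using dm assms by auto
    thus ?thesis using nb1 unfolding nb_def by auto
  qed
qed

lemma cardblock: assumes "N > 0" "i \<in> {1..nblocks n (2*N)}" shows "card (blockK n (2*N) i) \<le> N"
proof -
  define nb where "nb = nblocks n (2*N)"
  have nbN: "n \<le> nb * N" using nb_ge[OF assms(1)] nb_def by simp
  show ?thesis
  proof (cases "i < nb")
    case True
    then show ?thesis unfolding blockK_def nb_def[symmetric] using assms by (auto simp: algebra_simps)
  next
    case False
    have n0: "n > 0" using assms(2) by (cases n) (auto simp: nblocks_def)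
    have "blockK n (2*N) i \<subseteq> {(nb - 1) * N ..< (nb - 1) * N + N}"
      unfolding blockK_def nb_def[symmetric] using False nbN n0 assms(2) nb_def
      by (auto simp: algebra_simps diff_mult_distrib)
    from card_mono[OF _ this] show ?thesis by simp
  qed
qed

lemma card_bound:
  assumes N: "N > 0"
  shows "real (card (Bset n (2*N) \<epsilon>)) \<le> 2 ^ nblocks n (2*N) * 2 powr (real n * (1 - \<epsilon>))"
proof -
  define nb where "nb = nblocks n (2*N)"
  define F where "F = {I. I \<subseteq> {1..nb} \<and> real (card I) * real N \<le> real n * (1 - \<epsilon>)}"
  define U where "U I = (\<Union>i\<in>I. blockK n (2*N) i)" for I
  have finF: "finite F" unfolding F_def by (rule finite_subset[of _ "Pow {1..nb}"]) auto
  have sub: "Bset n (2*N) \<epsilon> \<subseteq> (\<Union>I\<in>F. Pow (U I))"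
  proof
    fix S assume S: "S \<in> Bset n (2*N) \<epsilon>"
    define I where "I = {i \<in> {1..nb}. S \<inter> blockK n (2*N) i \<noteq> {}}"
    have "real (card I) \<le> (2 * real n / real (2*N)) * (1 - \<epsilon>)"
      using S unfolding Bset_def Bcount_def I_def nb_def by simp
    also have "\<dots> = real n / real N * (1 - \<epsilon>)" by simp
    finally have "real (card I) * real N \<le> real n * (1 - \<epsilon>)" using N
      by (simp add: field_simps)
    hence IF: "I \<in> F" unfolding F_def I_def by auto
    have "S \<subseteq> U I"
    proof
      fix x assume x: "x \<in> S"
      hence "x < n" using S unfolding Bset_def by auto
      then obtain i where i: "i \<in> {1..nb}" "x \<in> blockK n (2*N) i" using cover[OF N] nb_def by blast
      hence "i \<in> I" unfolding I_def using x by auto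
      thus "x \<in> U I" using i unfolding U_def by auto
    qed
    thus "S \<in> (\<Union>I\<in>F. Pow (U I))" using IF by auto
  qed
  have finU: "finite (U I)" for I unfolding U_def blockK_def by auto
  have "card (Bset n (2*N) \<epsilon>) \<le> card (\<Union>I\<in>F. Pow (U I))"
    by (rule card_mono[OF _ sub]) (use finF finU in auto)
  also have "\<dots> \<le> (\<Sum>I\<in>F. card (Pow (U I)))" by (rule card_UN_le[OF finF])
  finally have c0: "card (Bset n (2*N) \<epsilon>) \<le> (\<Sum>I\<in>F. 2 ^ card (U I))"
    using finU by (simp add: card_Pow)
  have c1: "real (card (Bset n (2*N) \<epsilon>)) \<le> (\<Sum>I\<in>F. real (2 ^ card (U I)))"
    using c0 by (metis of_nat_le_iff of_nat_sum)
  have "real (2 ^ card (U I)) \<le> 2 powr (real n * (1 - \<epsilon>))" if I: "I \<in> F" for I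
  proof -
    have fI: "finite I" using I unfolding F_def by (auto intro: finite_subset)
    have "card (U I) \<le> (\<Sum>i\<in>I. card (blockK n (2*N) i))" unfolding U_def by (rule card_UN_le[OF fI])
    also have "\<dots> \<le> (\<Sum>i\<in>I. N)"
    proof (rule sum_mono)
      fix i assume "i \<in> I"
      hence "i \<in> {1..nblocks n (2*N)}" using I unfolding F_def nb_def by auto
      thus "card (blockK n (2*N) i) \<le> N" by (rule cardblock[OF N])
    qed
    also have "\<dots> = card I * N" by simp
    finally have "card (U I) \<le> card I * N" .
    hence "real (card (U I)) \<le> real (card I) * real N" by (metis of_nat_le_iff of_nat_mult)
    moreover have "real (card I) * real N \<le> real n * (1 - \<epsilon>)" using I unfolding F_def by auto
    ultimately have "real (card (U I)) \<le> real n * (1 - \<epsilon>)" by linarith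
    hence "2 powr real (card (U I)) \<le> 2 powr (real n * (1 - \<epsilon>))" by simp
    thus ?thesis by (simp add: powr_realpow)
  qed
  hence "(\<Sum>I\<in>F. real (2 ^ card (U I))) \<le> real (card F) * 2 powr (real n * (1 - \<epsilon>))"
    using sum_bounded_above[of F "\<lambda>I. real (2 ^ card (U I))"] by auto
  also have "real (card F) \<le> 2 ^ nb"
  proof -
    have "card F \<le> card (Pow {1..nb})" by (rule card_mono) (auto simp: F_def)
    thus ?thesis by (simp add: card_Pow)
  qed
  hence "real (card F) * 2 powr (real n * (1 - \<epsilon>)) \<le> 2 ^ nb * 2 powr (real n * (1 - \<epsilon>))"
    by (rule mult_right_mono) simp
  finally show ?thesis using c1 nb_def by simp
qed
lemma ratio_bound:
  assumes N: "N > 0"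
  shows "real (card (Bset n (2*N) \<epsilon>)) / 2 ^ n \<le> 2 * (2 powr (1 / real N - \<epsilon>)) ^ n"
proof -
  have "real (card (Bset n (2*N) \<epsilon>)) \<le> 2 ^ nblocks n (2*N) * 2 powr (real n * (1 - \<epsilon>))"
    by (rule card_bound[OF N])
  also have "(2::real) ^ nblocks n (2*N) = 2 powr real (nblocks n (2*N))" by (simp add: powr_realpow)
  also have "\<dots> \<le> 2 powr (real n / real N + 1)" using nb_le[OF N, of n] by simp
  finally have "real (card (Bset n (2*N) \<epsilon>)) \<le> 2 powr (real n / real N + 1 + real n * (1 - \<epsilon>))"
    by (simp add: powr_add)
  hence "real (card (Bset n (2*N) \<epsilon>)) / 2 ^ n \<le> 2 powr (real n / real N + 1 + real n * (1 - \<epsilon>)) / 2 powr real n"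
    by (simp add: powr_realpow divide_right_mono)
  also have "\<dots> = 2 powr (1 + (1 / real N - \<epsilon>) * real n)"
    by (simp add: powr_diff[symmetric] algebra_simps)
  also have "\<dots> = 2 * (2 powr (1 / real N - \<epsilon>)) ^ n"
    by (simp add: powr_add powr_powr[symmetric] powr_realpow)
  finally show ?thesis .
qed

theorem lemma3p2:
  fixes \<epsilon> :: real
  assumes "0 < \<epsilon>" and "\<epsilon> < 1"
  shows "\<exists>k::nat. k > 0 \<and> even k \<and>
           (\<lambda>n. real (card (Bset n k \<epsilon>)) / 2 ^ n) \<longlonglongrightarrow> 0"
proof -
  define N where "N = nat \<lceil>1 / \<epsilon>\<rceil> + 1"
  have N: "N > 0" unfolding N_def by simp
  have "1 / \<epsilon> < real N" unfolding N_def by linarith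
  hence "1 / real N < \<epsilon>" using assms N by (simp add: field_simps)
  hence c1: "2 powr (1 / real N - \<epsilon>) < 1" by (simp add: powr_less_one)
  have lim: "(\<lambda>n. 2 * (2 powr (1 / real N - \<epsilon>)) ^ n) \<longlonglongrightarrow> 0"
    using LIMSEQ_power_zero[of "2 powr (1 / real N - \<epsilon>)"] c1 tendsto_mult_right_zero by force
  have "(\<lambda>n. real (card (Bset n (2*N) \<epsilon>)) / 2 ^ n) \<longlonglongrightarrow> 0"
    by (rule tendsto_sandwich[OF _ _ tendsto_const lim]) (simp_all add: ratio_bound[OF N])
  thus ?thesis using N by (intro exI[of _ "2*N"]) auto
qed
end
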